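(* Let $\lambda_1,\lambda_2$, $\Omega$, $\varphi$, $B$, $U$ be as in the context, with $(c,\theta)\in\Omega$, and let $G(u)=\int_0^u\frac{c-\varphi'(s)}{B(s)}\,ds$. Then: (1) $G$ is odd; (2) $G(u+U)=G(u)+G(U)$ for all $u\in\mathbb{R}$; (3) $G(kU)=kG(U)$ for all $k\in\mathbb{Z}$; (4) $G(kU/2)=kG(U)/2$ for all odd integers $k$.
   Context: Either $\lambda_1>\lambda_2>0$ or $\lambda_1=\lambda_2=1$. For $c>0$ put $\theta_c^+=\pi$ if $c>\sqrt2\lambda_1$ and $\theta_c^+=\arccos(1-c^2/\lambda_1^2)$ if $0<c\le\sqrt2\lambda_1$; $\Omega=\{(c,\theta): c>0,\ |\theta|<\theta_c^+\}$. For $(c,\theta)\in\Omega$: $D=\sin\theta/c$; $\varphi:\mathbb{R}\to\mathbb{R}$ is the global solution of $\varphi'(u)=\sqrt{c^2+2\cos\theta\,B(u)-D^2B(u)^2}$, $\varphi(0)=0$, where $B(u)=\lambda_1^2\cos^2\varphi(u)+\lambda_2^2\sin^2\varphi(u)$; $\varphi$ is an odd increasing bijection and $U>0$ is the unique number with $\varphi(U)=\pi$. *)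

theory Defs
  imports "HOL-Analysis.Analysis"
begin

definition theta_plus :: "real \<Rightarrow> real \<Rightarrow> real" where
  "theta_plus l1 c = (if c > sqrt 2 * l1 then pi else arccos (1 - c\<^sup>2 / l1\<^sup>2))"

definition Omega :: "real \<Rightarrow> (real \<times> real) set" where
  "Omega l1 = {(c, \<theta>). c > 0 \<and> \<bar>\<theta>\<bar> < theta_plus l1 c}"

definition Bfun :: "real \<Rightarrow> real \<Rightarrow> (real \<Rightarrow> real) \<Rightarrow> real \<Rightarrow> real" where
  "Bfun l1 l2 \<phi> u = l1\<^sup>2 * (cos (\<phi> u))\<^sup>2 + l2\<^sup>2 * (sin (\<phi> u))\<^sup>2"

definition Gfun :: "real \<Rightarrow> real \<Rightarrow> real \<Rightarrow> (real \<Rightarrow> real) \<Rightarrow> real \<Rightarrow> real" where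
  "Gfun l1 l2 c \<phi> u = (LBINT s=0..u. (c - deriv \<phi> s) / Bfun l1 l2 \<phi> s)"

end

theory Submission imports Defs
begin

lemma LBINT_deriv:
  fixes h :: "real \<Rightarrow> real"
  assumes "continuous_on UNIV h"
  shows "((\<lambda>u. LBINT y=0..u. h y) has_real_derivative h x) (at x)"
proof -
  let ?a = "min 0 x - 1" and ?b = "max 0 x + 1"
  have "((\<lambda>u. LBINT y=0..u. h y) has_vector_derivative (h x)) (at x within {?a..?b})"
    using interval_integral_FTC2[of ?a 0 ?b h x] continuous_on_subset[OF assms] by (auto simp: zero_ereal_def)
  moreover have "x \<in> interior {?a..?b}" by auto
  ultimately have "((\<lambda>u. LBINT y=0..u. h y) has_vector_derivative (h x)) (at x)"
    using at_within_interior by metis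
  then show ?thesis by (simp add: has_real_derivative_iff_has_vector_derivative)
qed

lemma sym_per:
  fixes F h :: "real \<Rightarrow> real"
  assumes d: "\<And>x. (F has_real_derivative h x) (at x)"
    and ev: "\<And>x. h (-x) = h x" and per: "\<And>x. h (x + pi) = h x" and F0: "F 0 = 0"
  shows "F (-x) = - F x" "F (x + pi) = F x + F pi" "F (pi/2) = F pi / 2"
proof -
  have "\<forall>x. ((\<lambda>x. F (-x) + F x) has_real_derivative 0) (at x)"
  proof
    fix x
    have "((\<lambda>x. F (-x) + F x) has_real_derivative (h (-x) * -1 + h x)) (at x)"
    proof -
      have "((\<lambda>x. F (-x)) has_real_derivative h (-x) * -1) (at x)"
        by (rule DERIV_chain2[where f=F and g=uminus, OF d]) (auto intro!: derivative_eq_intros)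
      then show ?thesis by (rule DERIV_add[OF _ d])
    qed
    then show "((\<lambda>x. F (-x) + F x) has_real_derivative 0) (at x)" using ev by simp
  qed
  from DERIV_isconst_all[OF this, of x 0] F0 show o: "F (-x) = - F x" by simp
  have "\<forall>x. ((\<lambda>x. F (x + pi) - F x - F pi) has_real_derivative 0) (at x)"
  proof
    fix x
    have "((\<lambda>x. F (x + pi) - F x - F pi) has_real_derivative (h (x+pi) * 1 - h x - 0)) (at x)"
    proof -
      have "((\<lambda>x. F (x+pi)) has_real_derivative h (x+pi) * 1) (at x)"
        by (rule DERIV_chain2[where f=F and g="\<lambda>x. x+pi", OF d]) (auto intro!: derivative_eq_intros)
      then show ?thesis by (intro DERIV_diff d) auto
    qed
    then show "((\<lambda>x. F (x + pi) - F x - F pi) has_real_derivative 0) (at x)" using per by simp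
  qed
  note c = DERIV_isconst_all[OF this]
  from c[of x 0] F0 show p: "F (x + pi) = F x + F pi" by simp
  from c[of "-pi/2" 0] F0 have "F (-pi/2 + pi) = F (-pi/2) + F pi" by simp
  moreover have "F (-pi/2) = - F (pi/2)"
    using DERIV_isconst_all[OF \<open>\<forall>x. ((\<lambda>x. F (-x) + F x) has_real_derivative 0) (at x)\<close>, of "pi/2" 0] F0 by simp
  ultimately show "F (pi/2) = F pi / 2" by simp
qed


theorem proposition5p4:
  fixes l1 l2 c \<theta> U :: real and \<phi> :: "real \<Rightarrow> real"
  assumes lam: "(l1 > l2 \<and> l2 > 0) \<or> (l1 = 1 \<and> l2 = 1)"
    and Om: "(c, \<theta>) \<in> Omega l1"
    and ode: "\<forall>u. (\<phi> has_real_derivative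
        sqrt (c\<^sup>2 + 2 * cos \<theta> * Bfun l1 l2 \<phi> u - (sin \<theta> / c)\<^sup>2 * (Bfun l1 l2 \<phi> u)\<^sup>2)) (at u)"
    and init: "\<phi> 0 = 0"
    and U: "U > 0" "\<phi> U = pi"
  shows "(\<forall>u. Gfun l1 l2 c \<phi> (- u) = - Gfun l1 l2 c \<phi> u)
    \<and> (\<forall>u. Gfun l1 l2 c \<phi> (u + U) = Gfun l1 l2 c \<phi> u + Gfun l1 l2 c \<phi> U)
    \<and> (\<forall>k::int. Gfun l1 l2 c \<phi> (of_int k * U) = of_int k * Gfun l1 l2 c \<phi> U)
    \<and> (\<forall>k::int. odd k \<longrightarrow> Gfun l1 l2 c \<phi> (of_int k * U / 2) = of_int k * Gfun l1 l2 c \<phi> U / 2)"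
  proof -
  define b where "b y = l1\<^sup>2 * (cos y)\<^sup>2 + l2\<^sup>2 * (sin y)\<^sup>2" for y
  define Q where "Q x = c\<^sup>2 + 2 * cos \<theta> * x - (sin \<theta> / c)\<^sup>2 * x\<^sup>2" for x
  define g where "g y = sqrt (Q (b y))" for y
  define L where "L = l1\<^sup>2"
  have Bb: "Bfun l1 l2 \<phi> u = b (\<phi> u)" for u by (simp add: Bfun_def b_def)
  have ode': "(\<phi> has_real_derivative g (\<phi> u)) (at u)" for u
    using ode Bb by (simp add: g_def Q_def)
  have l: "0 < l2" "l2 \<le> l1" using lam by auto
  have c0: "c > 0" and th: "\<bar>\<theta>\<bar> < theta_plus l1 c" using Om by (auto simp: Omega_def)
  have L0: "L > 0" using l by (simp add: L_def)
  have bpos: "0 < b y \<and> b y \<le> L" for y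
  proof -
    have e: "b y = l1\<^sup>2 - (l1\<^sup>2 - l2\<^sup>2) * (sin y)\<^sup>2"
      by (simp add: b_def cos_squared_eq algebra_simps)
    have s1: "(sin y)\<^sup>2 \<le> 1" "0 \<le> (sin y)\<^sup>2" by (auto simp: abs_square_le_1)
    have ll: "l2\<^sup>2 \<le> l1\<^sup>2" using l by (simp add: power_mono)
    have "(l1\<^sup>2 - l2\<^sup>2) * (sin y)\<^sup>2 \<le> (l1\<^sup>2 - l2\<^sup>2)"
      using s1 ll by (simp add: mult_left_le)
    moreover have "0 \<le> (l1\<^sup>2 - l2\<^sup>2) * (sin y)\<^sup>2" using s1 ll by simp
    moreover have "l2\<^sup>2 > 0" using l by simp
    ultimately show ?thesis unfolding e L_def by linarith
  qed
  have cosgt: "cos \<theta> > 1 - c\<^sup>2 / L"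
  proof (cases "c > sqrt 2 * l1")
    case True
    then have tp: "\<bar>\<theta>\<bar> < pi" using th by (simp add: theta_plus_def)
    have "cos \<bar>\<theta>\<bar> > cos pi" by (rule cos_monotone_0_pi) (use tp in auto)
    then have "cos \<theta> > -1" by simp
    moreover have "c\<^sup>2 > (sqrt 2 * l1)\<^sup>2"
      using True l by (intro power_strict_mono) auto
    then have "c\<^sup>2 > 2 * L" by (simp add: L_def power_mult_distrib)
    then have "c\<^sup>2 / L > 2" using L0 by (simp add: field_simps)
    ultimately show ?thesis by linarith
  next
    case False
    then have tp: "\<bar>\<theta>\<bar> < arccos (1 - c\<^sup>2 / L)" using th by (simp add: theta_plus_def L_def)
    have "c\<^sup>2 \<le> (sqrt 2 * l1)\<^sup>2"
      using False c0 by (intro power_mono) auto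
    then have "c\<^sup>2 \<le> 2 * L" by (simp add: L_def power_mult_distrib)
    then have a1: "c\<^sup>2 / L \<le> 2" using L0 by (simp add: field_simps)
    have a2: "c\<^sup>2 / L > 0" using c0 L0 by simp
    have "cos \<bar>\<theta>\<bar> > cos (arccos (1 - c\<^sup>2 / L))"
      by (rule cos_monotone_0_pi) (use tp a1 a2 in \<open>auto intro!: arccos_ubound\<close>)
    then show ?thesis using a1 a2 by simp
  qed
  have QL: "Q L > 0"
  proof -
    have "c\<^sup>2 * Q L = (c\<^sup>2 + cos \<theta> * L - L) * (c\<^sup>2 + cos \<theta> * L + L)"
    proof -
      have "c\<^sup>2 * Q L = c\<^sup>2 * c\<^sup>2 + 2 * cos \<theta> * L * c\<^sup>2 - (sin \<theta>)\<^sup>2 * L\<^sup>2"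
        using c0 by (simp add: Q_def power_divide field_simps)
      also have "\<dots> = (c\<^sup>2 + cos \<theta> * L - L) * (c\<^sup>2 + cos \<theta> * L + L)"
        unfolding sin_squared_eq by (simp add: algebra_simps power2_eq_square)
      finally show ?thesis .
    qed
    moreover have "c\<^sup>2 + cos \<theta> * L - L > 0"
      using cosgt L0 by (simp add: field_simps)
    moreover have "c\<^sup>2 + cos \<theta> * L + L > 0"
    proof -
      have "cos \<theta> * L \<ge> -1 * L" using L0 by (intro mult_right_mono) auto
      then show ?thesis using c0 by (smt (verit) zero_less_power)
    qed
    ultimately have "c\<^sup>2 * Q L > 0" by simp
    then show ?thesis using c0 by (simp add: zero_less_mult_iff)
  qed
  have Qpos: "Q x > 0" if "0 \<le> x" "x \<le> L" for x
  proof -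
    have "Q x * L = (L - x) * c\<^sup>2 + x * Q L + (sin \<theta> / c)\<^sup>2 * x * L * (L - x)"
      using c0 by (simp add: Q_def power_divide field_simps power2_eq_square)
    moreover have "(L - x) * c\<^sup>2 + x * Q L > 0"
    proof (cases "x = L")
      case True then show ?thesis using QL L0 by simp
    next
      case False then show ?thesis using that QL c0
        by (smt (verit) mult_nonneg_nonneg mult_pos_pos zero_less_power)
    qed
    moreover have "(sin \<theta> / c)\<^sup>2 * x * L * (L - x) \<ge> 0" using that L0 by simp
    ultimately have "Q x * L > 0" by linarith
    then show ?thesis using L0 by (simp add: zero_less_mult_iff)
  qed
  have gpos: "g y > 0" for y using Qpos[of "b y"] bpos[of y] by (simp add: g_def)
  have bne: "b y \<noteq> 0" for y using bpos[of y] by simp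
  have gne: "g y \<noteq> 0" for y using gpos[of y] by simp
  have bsym: "b (-y) = b y" "b (y + pi) = b y" for y by (simp_all add: b_def)
  have gsym: "g (-y) = g y" "g (y + pi) = g y" for y by (simp_all add: g_def bsym)
  have contb: "continuous_on UNIV b" unfolding b_def[abs_def] by (intro continuous_intros)
  have contg: "continuous_on UNIV g"
    unfolding g_def[abs_def] Q_def b_def by (intro continuous_intros)
  have contphi: "continuous_on UNIV \<phi>"
    by (metis DERIV_continuous continuous_at_imp_continuous_on ode')
  define T where "T (x::real) = (LBINT y=0..x. 1 / g y)" for x
  have dT: "(T has_real_derivative 1 / g x) (at x)" for x
    unfolding T_def[abs_def]
    by (rule LBINT_deriv) (use contg gne in \<open>auto intro!: continuous_intros\<close>)
  have T0: "T 0 = 0" by (simp add: T_def zero_ereal_def)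
  have Tsym: "T (-x) = - T x" "T (x + pi) = T x + T pi" "T (pi/2) = T pi / 2" for x
    by (rule sym_per[where h="\<lambda>x. 1 / g x", OF dT _ _ T0]; simp add: gsym)+
  have Tphi: "T (\<phi> u) = u" for u
  proof -
    have "\<forall>u. ((\<lambda>u. T (\<phi> u) - u) has_real_derivative 0) (at u)"
    proof
      fix u
      have "((\<lambda>u. T (\<phi> u)) has_real_derivative 1 / g (\<phi> u) * g (\<phi> u)) (at u)"
        by (rule DERIV_chain2[where f=T, OF dT ode'])
      then have "((\<lambda>u. T (\<phi> u) - u) has_real_derivative 1 / g (\<phi> u) * g (\<phi> u) - 1) (at u)"
        by (intro derivative_eq_intros) auto
      then show "((\<lambda>u. T (\<phi> u) - u) has_real_derivative 0) (at u)" using gne by simp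
    qed
    from DERIV_isconst_all[OF this, of u 0] show ?thesis using init T0 by simp
  qed
  have Tinj: "x = y" if "T x = T y" for x y
  proof -
    have lt: "T x < T y" if "x < y" for x y
      by (rule DERIV_pos_imp_increasing[OF that]) (use dT gpos in force)
    show ?thesis using lt[of x y] lt[of y x] that by (cases x y rule: linorder_cases) auto
  qed
  have UT: "U = T pi" using Tphi[of U] U by simp
  have phi_odd: "\<phi> (-u) = - \<phi> u" for u
    by (rule Tinj) (simp add: Tphi Tsym)
  have phi_per: "\<phi> (u + U) = \<phi> u + pi" for u
    by (rule Tinj) (simp add: Tphi Tsym UT)
  have phi_half: "\<phi> (U/2) = pi/2"
    by (rule Tinj) (simp add: Tphi Tsym UT)
  define j where "j y = (c / g y - 1) / b y" for y
  define J where "J (x::real) = (LBINT y=0..x. j y)" for x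
  have dJ: "(J has_real_derivative j x) (at x)" for x
    unfolding J_def[abs_def]
    by (rule LBINT_deriv) (use contg gne contb bne in \<open>auto simp: j_def[abs_def] intro!: continuous_intros\<close>)
  have J0: "J 0 = 0" by (simp add: J_def zero_ereal_def)
  have Jsym: "J (-x) = - J x" "J (x + pi) = J x + J pi" "J (pi/2) = J pi / 2" for x
    by (rule sym_per[where h=j, OF dJ _ _ J0]; simp add: gsym bsym j_def)+
  define k where "k s = (c - g (\<phi> s)) / b (\<phi> s)" for s
  have Gk: "Gfun l1 l2 c \<phi> u = (LBINT s=0..u. k s)" for u
  proof -
    have "(\<lambda>s. (c - deriv \<phi> s) / Bfun l1 l2 \<phi> s) = k"
      using ode' by (auto simp: k_def Bb DERIV_imp_deriv)
    then show ?thesis by (simp add: Gfun_def)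
  qed
  have contk: "continuous_on UNIV k"
  proof -
    have "continuous_on UNIV (\<lambda>s. g (\<phi> s))"
      using continuous_on_compose2[OF contg contphi] by auto
    moreover have "continuous_on UNIV (\<lambda>s. b (\<phi> s))"
      using continuous_on_compose2[OF contb contphi] by auto
    ultimately show ?thesis unfolding k_def[abs_def] using bne
      by (intro continuous_intros) auto
  qed
  have GJ: "Gfun l1 l2 c \<phi> u = J (\<phi> u)" for u
  proof -
    have d: "((\<lambda>s. J (\<phi> s)) has_real_derivative k s) (at s)" for s
    proof -
      have "((\<lambda>s. J (\<phi> s)) has_real_derivative j (\<phi> s) * g (\<phi> s)) (at s)"
        by (rule DERIV_chain2[where f=J, OF dJ ode'])
      moreover have "j (\<phi> s) * g (\<phi> s) = k s"
        using gne[of "\<phi> s"] bne[of "\<phi> s"] by (simp add: j_def k_def field_simps)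
      ultimately show ?thesis by simp
    qed
    have "(LBINT s=0..u. k s) = J (\<phi> u) - J (\<phi> 0)"
      unfolding zero_ereal_def
      by (rule interval_integral_FTC_finite)
        (use contk d in \<open>auto intro: continuous_on_subset has_field_derivative_at_within
          simp: has_real_derivative_iff_has_vector_derivative[symmetric]\<close>)
    then show ?thesis using Gk init J0 by simp
  qed
  let ?G = "Gfun l1 l2 c \<phi>"
  have P1: "?G (-u) = - ?G u" for u by (simp add: GJ phi_odd Jsym)
  have GU: "?G U = J pi" using U(2) by (simp add: GJ)
  have P2: "?G (u + U) = ?G u + ?G U" for u using U(2) by (simp add: GJ phi_per Jsym)
  have Pn: "?G (u + of_nat n * U) = ?G u + of_nat n * ?G U" for u n
  proof (induction n)
    case 0 then show ?case by simp
  next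
    case (Suc n)
    have "?G (u + of_nat (Suc n) * U) = ?G ((u + of_nat n * U) + U)" by (simp add: algebra_simps)
    also have "\<dots> = ?G u + of_nat (Suc n) * ?G U" unfolding P2 Suc by (simp add: algebra_simps)
    finally show ?case .
  qed
  have Pk: "?G (u + of_int m * U) = ?G u + of_int m * ?G U" for u m
  proof (cases m rule: int_cases2)
    case (nonneg n) then show ?thesis using Pn by simp
  next
    case (nonpos n)
    have "?G u = ?G ((u - of_nat n * U) + of_nat n * U)" by simp
    also have "\<dots> = ?G (u - of_nat n * U) + of_nat n * ?G U" by (rule Pn)
    finally show ?thesis using nonpos by simp
  qed
  have G0: "?G 0 = 0" by (simp add: GJ init J0)
  have P3: "?G (of_int m * U) = of_int m * ?G U" for m using Pk[of 0 m] G0 by simp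
  have P4: "?G (of_int m * U / 2) = of_int m * ?G U / 2" if "odd m" for m
  proof -
    obtain n where m: "m = 2 * n + 1" using \<open>odd m\<close> oddE by blast
    have "of_int m * U / 2 = U / 2 + of_int n * U" by (simp add: m algebra_simps)
    then have "?G (of_int m * U / 2) = ?G (U/2) + of_int n * ?G U" by (simp only: Pk)
    moreover have "?G (U/2) = ?G U / 2" using U(2) by (simp add: GJ phi_half Jsym)
    ultimately show ?thesis by (simp add: m algebra_simps)
  qed
  show ?thesis using P1 P2 P3 P4 by blast
qed

end
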